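(* Let $1\le p\le2$, $A\in\mathbb{R}^{m\times n}$, let $\bar{x}\in\mathbb{R}^n$ have exactly $S\ge1$ nonzero groups, $b:=A\bar{x}$, and suppose the $(p,1/2)$-GREC$(S,S)$ holds. Let $\lambda>0$ and let $x^*$ be a global minimizer of $\|Ax-b\|_2^2+\lambda\|x\|_{p,1/2}^{1/2}$. Then $\|x^*-\bar{x}\|_2^2\le 2\lambda^{4/3}S/\phi_{p,1/2}^{8/3}(S,S)$; in particular $\|x^*-\bar{x}\|_2^2=O(\lambda^{4/3}S)$.
   Context: Group structure: $\{1,\dots,n\}$ is partitioned into disjoint nonempty index sets $\mathcal{G}_1,\dots,\mathcal{G}_r$; $x_{\mathcal{G}_i}$ is the subvector indexed by $\mathcal{G}_i$. For $\mathcal{J}\subseteq\{1,\dots,r\}$, $\|x_{\mathcal{G}_{\mathcal{J}}}\|_{p,q}:=(\sum_{i\in\mathcal{J}}\|x_{\mathcal{G}_i}\|_p^q)^{1/q}$ and $\|x\|_{p,q}:=\|x_{\mathcal{G}_{\{1,\dots,r\}}}\|_{p,q}$. For $\mathcal{J}\subseteq\{1,\dots,r\}$ and integer $N$, $\mathcal{J}(x;N)$ is the set of the $N$ indices $i\in\mathcal{J}^c$ with the largest $\|x_{\mathcal{G}_i}\|_p$ (ties broken arbitrarily). $\phi_{p,q}(S,N):=\inf\{\|Ax\|_2/\|x_{\mathcal{G}_{\mathcal{N}}}\|_{p,2}: x\ne0,\ |\mathcal{J}|\le S,\ \|x_{\mathcal{G}_{\mathcal{J}^c}}\|_{p,q}\le\|x_{\mathcal{G}_{\mathcal{J}}}\|_{p,q},\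 \mathcal{N}=\mathcal{J}(x;N)\cup\mathcal{J}\}$; the $(p,q)$-GREC$(S,N)$ holds if $\phi_{p,q}(S,N)>0$. *)

theory Defs
  imports "HOL-Analysis.Analysis"
begin

definition group_partition :: "nat \<Rightarrow> (nat \<Rightarrow> 'n set) \<Rightarrow> bool" where
  "group_partition r G \<longleftrightarrow>
     (\<forall>i<r. G i \<noteq> {}) \<and>
     (\<forall>i<r. \<forall>j<r. i \<noteq> j \<longrightarrow> G i \<inter> G j = {}) \<and>
     (\<Union>i<r. G i) = UNIV"

definition gnorm :: "real \<Rightarrow> 'n set \<Rightarrow> real ^ 'n::finite \<Rightarrow> real" where
  "gnorm p I x = (\<Sum>j\<in>I. \<bar>x $ j\<bar> powr p) powr (1 / p)"

definition pq_norm :: "real \<Rightarrow> real \<Rightarrow> (nat \<Rightarrow> 'n set) \<Rightarrow> nat set \<Rightarrow> real ^ 'n::finite \<Rightarrow> real" where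
  "pq_norm p q G J x = (\<Sum>i\<in>J. gnorm p (G i) x powr q) powr (1 / q)"

text \<open>K is an admissible choice of J(x;N): N indices of J^c (within {0..<r}) with the largest
  group norms (ties broken arbitrarily; if J^c has fewer than N elements, all of it).\<close>
definition top_groups ::
  "nat \<Rightarrow> (nat \<Rightarrow> 'n set) \<Rightarrow> real \<Rightarrow> nat set \<Rightarrow> real ^ 'n::finite \<Rightarrow> nat \<Rightarrow> nat set \<Rightarrow> bool" where
  "top_groups r G p J x N K \<longleftrightarrow>
     K \<subseteq> {..<r} - J \<and> card K = min N (card ({..<r} - J)) \<and>
     (\<forall>i\<in>K. \<forall>k\<in>({..<r} - J) - K. gnorm p (G k) x \<le> gnorm p (G i) x)"

definition grec_phi ::
  "real ^ 'n::finite ^ 'm::finite \<Rightarrow> nat \<Rightarrow> (nat \<Rightarrow> 'n set) \<Rightarrow> real \<Rightarrow> real \<Rightarrow> nat \<Rightarrow> nat \<Rightarrow> real" where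
  "grec_phi A r G p q S N = Inf {norm (A *v x) / pq_norm p 2 G (K \<union> J) x | x J K.
       x \<noteq> 0 \<and> J \<subseteq> {..<r} \<and> card J \<le> S \<and>
       pq_norm p q G ({..<r} - J) x \<le> pq_norm p q G J x \<and>
       top_groups r G p J x N K}"

definition GREC :: "real ^ 'n::finite ^ 'm::finite \<Rightarrow> nat \<Rightarrow> (nat \<Rightarrow> 'n set) \<Rightarrow> real \<Rightarrow> real \<Rightarrow> nat \<Rightarrow> nat \<Rightarrow> bool" where
  "GREC A r G p q S N \<longleftrightarrow> grec_phi A r G p q S N > 0"

definition nonzero_groups :: "nat \<Rightarrow> (nat \<Rightarrow> 'n set) \<Rightarrow> real ^ 'n::finite \<Rightarrow> nat set" where
  "nonzero_groups r G x = {i. i < r \<and> (\<exists>j\<in>G i. x $ j \<noteq> 0)}"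

end

theory Submission
  imports Defs
begin


lemma powr_conv2:
  fixes p x y t :: real
  assumes "1 \<le> p" "0 \<le> x" "0 \<le> y" "0 \<le> t" "t \<le> 1"
  shows "((1-t)*x + t*y) powr p \<le> (1-t) * x powr p + t * y powr p"
proof -
  have tp: "u powr p \<le> u" if "0 \<le> u" "u \<le> 1" for u :: real
  proof (cases "u = 0")
    case False
    then have "u powr p \<le> u powr 1"
      using that assms(1) by (intro powr_mono') auto
    then show ?thesis using that by simp
  qed (use assms in simp)
  consider "x = 0" | "y = 0" | "x > 0 \<and> y > 0" using assms by linarith
  then show ?thesis
  proof cases
    case 1
    have "(t*y) powr p = t powr p * y powr p" using assms by (simp add: powr_mult)
    also have "\<dots> \<le> t * y powr p" using tp[of t] assms by (intro mult_right_mono) auto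
    finally show ?thesis using 1 assms by simp
  next
    case 2
    have "((1-t)*x) powr p = (1-t) powr p * x powr p" using assms by (simp add: powr_mult)
    also have "\<dots> \<le> (1-t) * x powr p" using tp[of "1-t"] assms by (intro mult_right_mono) auto
    finally show ?thesis using 2 assms by simp
  next
    case 3
    show ?thesis using convex_onD[OF powr_convex[OF assms(1)], of t x y] 3 assms by simp
  qed
qed

lemma gnorm_nonneg: "gnorm p I x \<ge> 0"
  by (simp add: gnorm_def)

lemma gnorm_pow: assumes "p > 0" shows "gnorm p I x powr p = (\<Sum>j\<in>I. \<bar>x $ j\<bar> powr p)"
  using assms by (simp add: gnorm_def powr_powr sum_nonneg)

lemma gnorm_zero: assumes "p > 0" "gnorm p I x = 0" "j \<in> I" shows "x $ j = 0"
proof -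
  have "(\<Sum>j\<in>I. \<bar>x $ j\<bar> powr p) = 0" using gnorm_pow[OF assms(1), of I x] assms by simp
  moreover have "finite I" by simp
  ultimately have "\<bar>x $ j\<bar> powr p = 0" using assms(3)
    by (subst (asm) sum_nonneg_eq_0_iff) auto
  then show ?thesis by simp
qed

lemma gnorm_zero2: assumes "\<forall>j\<in>I. x $ j = 0" "p > 0" shows "gnorm p I x = 0"
  using assms by (simp add: gnorm_def)

lemma gnorm_cong: assumes "\<forall>j\<in>I. x $ j = y $ j" shows "gnorm p I x = gnorm p I y"
  using assms unfolding gnorm_def by (metis (no_types, lifting) sum.cong)

lemma gnorm_uminus: "gnorm p I (-x) = gnorm p I x"
  by (simp add: gnorm_def)

lemma conv_ab:
  fixes a b X Y p :: real
  assumes "a > 0" "b > 0" "X \<ge> 0" "Y \<ge> 0" "p \<ge> 1"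
  shows "(X+Y) powr p \<le> (a+b) powr p * (a/(a+b) * (X powr p / a powr p) + b/(a+b) * (Y powr p / b powr p))"
proof -
  define t where "t = b/(a+b)"
  have t: "0 \<le> t" "t \<le> 1" "1 - t = a/(a+b)" using assms by (auto simp: t_def field_simps)
  have "(1-t)*(X/a) = X/(a+b)" using assms t(3) by simp
  moreover have "t*(Y/b) = Y/(a+b)" using assms by (simp add: t_def)
  ultimately have "(1-t)*(X/a) + t*(Y/b) = (X+Y)/(a+b)" by (simp add: add_divide_distrib)
  then have "((X+Y)/(a+b)) powr p \<le> (1-t) * (X/a) powr p + t * (Y/b) powr p"
    using powr_conv2[of p "X/a" "Y/b" t] assms t by auto
  then have "((X+Y)/(a+b)) powr p \<le> a/(a+b) * (X powr p / a powr p) + b/(a+b) * (Y powr p / b powr p)"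
    using assms t by (simp add: powr_divide t_def)
  moreover have "((X+Y)/(a+b)) powr p = (X+Y) powr p / (a+b) powr p" using assms by (simp add: powr_divide)
  ultimately show ?thesis using assms by (simp add: divide_le_eq mult.commute)
qed

lemma sum_lin:
  fixes u v :: "'a \<Rightarrow> real"
  shows "(\<Sum>j\<in>I. c * (\<alpha> * (u j / A) + \<beta> * (v j / B))) = c * (\<alpha> * ((\<Sum>j\<in>I. u j) / A) + \<beta> * ((\<Sum>j\<in>I. v j) / B))"
  unfolding sum_divide_distrib sum_distrib_left sum.distrib[symmetric] by simp

lemma gnorm_triangle:
  assumes "p \<ge> 1"
  shows "gnorm p I (x + y) \<le> gnorm p I x + gnorm p I y"
proof -
  define a where "a = gnorm p I x"
  define b where "b = gnorm p I y"
  have p0: "p > 0" using assms by simp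
  show ?thesis
  proof (cases "a = 0 \<or> b = 0")
    case True
    then show ?thesis
    proof
      assume "a = 0"
      then have "\<forall>j\<in>I. x $ j = 0" using gnorm_zero[OF p0] a_def by auto
      then have "gnorm p I (x+y) = gnorm p I y" by (intro gnorm_cong) auto
      then show ?thesis using gnorm_nonneg[of p I x] by simp
    next
      assume "b = 0"
      then have "\<forall>j\<in>I. y $ j = 0" using gnorm_zero[OF p0] b_def by auto
      then have "gnorm p I (x+y) = gnorm p I x" by (intro gnorm_cong) auto
      then show ?thesis using gnorm_nonneg[of p I y] by simp
    qed
  next
    case False
    then have ab: "a > 0" "b > 0" using gnorm_nonneg a_def b_def by (metis less_eq_real_def)+
    have "(\<Sum>j\<in>I. \<bar>(x+y) $ j\<bar> powr p) \<le> (\<Sum>j\<in>I. (\<bar>x $ j\<bar> + \<bar>y $ j\<bar>) powr p)"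
      using p0 by (intro sum_mono powr_mono2) auto
    also have "\<dots> \<le> (\<Sum>j\<in>I. (a+b) powr p * (a/(a+b) * (\<bar>x $ j\<bar> powr p / a powr p) + b/(a+b) * (\<bar>y $ j\<bar> powr p / b powr p)))"
      using ab assms by (intro sum_mono conv_ab) auto
    also have "\<dots> = (a+b) powr p * (a/(a+b) * ((\<Sum>j\<in>I. \<bar>x $ j\<bar> powr p) / a powr p) + b/(a+b) * ((\<Sum>j\<in>I. \<bar>y $ j\<bar> powr p) / b powr p))"
      by (rule sum_lin)
    also have "\<dots> = (a+b) powr p * (a/(a+b) + b/(a+b))"
    proof -
      have ex: "(\<Sum>j\<in>I. \<bar>x $ j\<bar> powr p) = a powr p" using gnorm_pow[OF p0, of I x] a_def by simp
      have ey: "(\<Sum>j\<in>I. \<bar>y $ j\<bar> powr p) = b powr p" using gnorm_pow[OF p0, of I y] b_def by simp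
      show ?thesis unfolding ex ey using ab by simp
    qed
    also have "\<dots> = (a+b) powr p" using ab by (simp add: add_divide_distrib[symmetric])
    finally have le: "(\<Sum>j\<in>I. \<bar>(x+y) $ j\<bar> powr p) \<le> (a+b) powr p" .
    have "gnorm p I (x+y) = (\<Sum>j\<in>I. \<bar>(x+y) $ j\<bar> powr p) powr (1/p)" by (simp add: gnorm_def)
    also have "\<dots> \<le> ((a+b) powr p) powr (1/p)"
      using le p0 by (intro powr_mono2) (auto simp: sum_nonneg)
    also have "\<dots> = a + b" using ab p0 by (simp add: powr_powr)
    finally show ?thesis using a_def b_def by simp
  qed
qed

lemma small_pow: fixes u p :: real assumes "0 \<le> u" "u powr p \<le> 1" "1 \<le> p" "p \<le> 2"
  shows "u^2 \<le> u powr p"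
proof -
  have u1: "u \<le> 1"
  proof (rule ccontr)
    assume nu: "\<not> u \<le> 1"
    then have u1': "1 \<le> u" by simp
    have "u = u powr 1" by (rule powr_one[OF assms(1), symmetric])
    also have "\<dots> \<le> u powr p" by (rule powr_mono[OF assms(3) u1'])
    also have "\<dots> \<le> 1" by (rule assms(2))
    finally show False using nu by simp
  qed
  have "u^2 = u powr 2" by (rule powr_numeral[OF assms(1), symmetric])
  also have "\<dots> \<le> u powr p" by (rule powr_mono'[OF assms(4) assms(1) u1])
  finally show ?thesis .
qed

lemma gnorm_l2:
  assumes "1 \<le> p" "p \<le> 2"
  shows "(\<Sum>j\<in>I. (x $ j)^2) \<le> gnorm p I x ^ 2"
proof -
  define a where "a = gnorm p I x"
  have p0: "p > 0" using assms by simp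
  show ?thesis
  proof (cases "a = 0")
    case True
    then have "\<forall>j\<in>I. x $ j = 0" using gnorm_zero[OF p0] a_def by auto
    then show ?thesis by simp
  next
    case False
    have a0: "a \<ge> 0" unfolding a_def by (rule gnorm_nonneg)
    have a: "a > 0" using a0 False by simp
    have S0: "(\<Sum>j\<in>I. \<bar>x $ j\<bar> powr p) = a powr p" unfolding a_def by (rule gnorm_pow[OF p0, symmetric])
    have apos: "a powr p > 0" using a by simp
    have "(\<Sum>j\<in>I. (\<bar>x $ j\<bar> / a) powr p) = (\<Sum>j\<in>I. \<bar>x $ j\<bar> powr p / a powr p)"
      by (simp only: powr_divide)
    also have "\<dots> = (\<Sum>j\<in>I. \<bar>x $ j\<bar> powr p) / a powr p" by (rule sum_divide_distrib[symmetric])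
    also have "\<dots> = 1" using S0 apos by simp
    finally have S1: "(\<Sum>j\<in>I. (\<bar>x $ j\<bar> / a) powr p) = 1" .
    have each: "(\<bar>x $ j\<bar> / a) powr p \<le> 1" if "j \<in> I" for j
    proof -
      have "(\<bar>x $ j\<bar> / a) powr p \<le> (\<Sum>j\<in>I. (\<bar>x $ j\<bar> / a) powr p)"
        by (rule member_le_sum[OF that]) auto
      then show ?thesis unfolding S1 .
    qed
    have pt: "(\<bar>x $ j\<bar> / a)^2 \<le> (\<bar>x $ j\<bar> / a) powr p" if "j \<in> I" for j
      by (rule small_pow[OF _ each[OF that] assms]) (use a in simp)
    have "(\<Sum>j\<in>I. (\<bar>x $ j\<bar> / a)^2) \<le> (\<Sum>j\<in>I. (\<bar>x $ j\<bar> / a) powr p)"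
      by (rule sum_mono) (rule pt)
    then have sq1: "(\<Sum>j\<in>I. (\<bar>x $ j\<bar> / a)^2) \<le> 1" unfolding S1 .
    have "(\<Sum>j\<in>I. (\<bar>x $ j\<bar> / a)^2) = (\<Sum>j\<in>I. (x $ j)^2) / a^2"
      by (simp add: power_divide sum_divide_distrib)
    then have "(\<Sum>j\<in>I. (x $ j)^2) / a^2 \<le> 1" using sq1 by simp
    then have "(\<Sum>j\<in>I. (x $ j)^2) \<le> a^2" using a by (simp add: divide_le_eq)
    then show ?thesis unfolding a_def .
  qed
qed

lemma top_exists:
  fixes f :: "nat \<Rightarrow> real"
  assumes "finite U"
  shows "\<exists>K\<subseteq>U. card K = min n (card U) \<and> (\<forall>i\<in>K. \<forall>k\<in>U - K. f k \<le> f i)"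
proof (induction n)
  case 0
  then show ?case by (intro exI[of _ "{}"]) auto
next
  case (Suc n)
  then obtain K where K: "K \<subseteq> U" "card K = min n (card U)" "\<forall>i\<in>K. \<forall>k\<in>U - K. f k \<le> f i" by blast
  have fK: "finite K" using K(1) assms finite_subset by blast
  show ?case
  proof (cases "card K = card U")
    case True
    then show ?thesis using K by (intro exI[of _ K]) auto
  next
    case False
    then have "K \<noteq> U" by auto
    then have ne: "U - K \<noteq> {}" using K(1) by auto
    have cK: "card K = n" using False K(2) by (simp add: min_def split: if_splits)
    have finD: "finite (U - K)" using assms by simp
    have "Max (f ` (U - K)) \<in> f ` (U - K)" using finD ne by (intro Max_in) auto
    then obtain k0 where k0in: "k0 \<in> U - K" and k0M: "f k0 = Max (f ` (U - K))" by auto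
    have "\<forall>k\<in>U-K. f k \<le> f k0"
    proof
      fix k assume "k \<in> U - K"
      then have "f k \<in> f ` (U - K)" by (rule imageI)
      then have "f k \<le> Max (f ` (U - K))" using finD by (intro Max_ge) auto
      then show "f k \<le> f k0" unfolding k0M .
    qed
    note k0 = k0in this
    have "card K < card U" using K(1) \<open>K \<noteq> U\<close> assms psubset_card_mono by blast
    then have "card (insert k0 K) = min (Suc n) (card U)" using cK k0 fK by auto
    then show ?thesis using K k0 by (intro exI[of _ "insert k0 K"]) auto
  qed
qed

lemma power_mean4:
  fixes f :: "nat \<Rightarrow> real"
  assumes "\<forall>i\<in>I. f i \<ge> 0"
  shows "(\<Sum>i\<in>I. f i)^4 \<le> real (card I)^3 * (\<Sum>i\<in>I. f i ^ 4)"
proof -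
  have 1: "(\<Sum>i\<in>I. f i)^2 \<le> (\<Sum>i\<in>I. (f i)^2) * card I" by (rule sum_squared_le_sum_of_squares)
  have 2: "(\<Sum>i\<in>I. (f i)^2)^2 \<le> (\<Sum>i\<in>I. ((f i)^2)^2) * card I" by (rule sum_squared_le_sum_of_squares)
  have "(\<Sum>i\<in>I. f i)^4 = ((\<Sum>i\<in>I. f i)^2)^2" by simp
  also have "\<dots> \<le> ((\<Sum>i\<in>I. (f i)^2) * card I)^2"
    using 1 by (intro power_mono) auto
  also have "\<dots> = (\<Sum>i\<in>I. (f i)^2)^2 * card I ^ 2" by (simp add: power_mult_distrib)
  also have "\<dots> \<le> (\<Sum>i\<in>I. ((f i)^2)^2) * card I * card I ^ 2"
    using 2 by (intro mult_right_mono) auto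
  also have "\<dots> = real (card I)^3 * (\<Sum>i\<in>I. f i ^ 4)"
    by (simp add: power_mult[symmetric] algebra_simps eval_nat_numeral)
  finally show ?thesis .
qed



lemma pq_half: "pq_norm p (1/2) G I x = (\<Sum>i\<in>I. sqrt (gnorm p (G i) x))^2"
proof -
  have "pq_norm p (1/2) G I x = (\<Sum>i\<in>I. gnorm p (G i) x powr (1/2)) powr 2" by (simp add: pq_norm_def)
  moreover have "(\<Sum>i\<in>I. gnorm p (G i) x powr (1/2)) = (\<Sum>i\<in>I. sqrt (gnorm p (G i) x))"
    by (intro sum.cong refl) (simp add: powr_half_sqrt gnorm_nonneg)
  moreover have "(\<Sum>i\<in>I. sqrt (gnorm p (G i) x)) \<ge> 0" by (simp add: sum_nonneg gnorm_nonneg)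
  ultimately show ?thesis by (simp add: powr_numeral)
qed

lemma pq_half2: "pq_norm p (1/2) G I x powr (1/2) = (\<Sum>i\<in>I. sqrt (gnorm p (G i) x))"
proof -
  have "(\<Sum>i\<in>I. sqrt (gnorm p (G i) x)) \<ge> 0" by (simp add: sum_nonneg gnorm_nonneg)
  then show ?thesis unfolding pq_half by (simp add: powr_half_sqrt)
qed

lemma pq_two: "pq_norm p 2 G I x = sqrt (\<Sum>i\<in>I. gnorm p (G i) x ^ 2)"
proof -
  have "(\<Sum>i\<in>I. gnorm p (G i) x powr 2) = (\<Sum>i\<in>I. gnorm p (G i) x ^ 2)"
    by (intro sum.cong refl) (simp add: powr_numeral gnorm_nonneg)
  moreover have "(\<Sum>i\<in>I. gnorm p (G i) x ^ 2) \<ge> 0" by (simp add: sum_nonneg)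
  ultimately show ?thesis by (simp add: pq_norm_def powr_half_sqrt)
qed

lemma norm_sq_vec: "norm (x :: real ^ 'n::finite) ^ 2 = (\<Sum>j\<in>UNIV. (x $ j)^2)"
  by (simp add: norm_vec_def L2_set_def sum_nonneg)

lemma le_base3: fixes a b :: real assumes "a^3 \<le> b^3" "0 \<le> b" shows "a \<le> b"
  using power_le_imp_le_base[of a 2 b] assms by (simp add: eval_nat_numeral)

lemma le_base4: fixes a b :: real assumes "a^4 \<le> b^4" "0 \<le> b" shows "a \<le> b"
  using power_le_imp_le_base[of a 3 b] assms by (simp add: eval_nat_numeral)

lemma norm_groups:
  assumes "group_partition r G" "1 \<le> p" "p \<le> 2"
  shows "norm (d :: real ^ 'n::finite) ^ 2 \<le> (\<Sum>i<r. gnorm p (G i) d ^ 2)"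
proof -
  have U: "(\<Union>i\<in>{..<r}. G i) = UNIV" using assms(1) by (simp add: group_partition_def)
  have disj: "\<forall>i\<in>{..<r}. \<forall>j\<in>{..<r}. i \<noteq> j \<longrightarrow> G i \<inter> G j = {}"
    using assms(1) by (simp add: group_partition_def)
  have "norm d ^ 2 = (\<Sum>j\<in>UNIV. (d $ j)^2)" by (rule norm_sq_vec)
  also have "\<dots> = (\<Sum>j\<in>(\<Union>i\<in>{..<r}. G i). (d $ j)^2)" by (simp only: U)
  also have "\<dots> = (\<Sum>i<r. (\<Sum>j\<in>G i. (d $ j)^2))"
    by (rule sum.UNION_disjoint) (use disj in auto)
  also have "\<dots> \<le> (\<Sum>i<r. gnorm p (G i) d ^ 2)"
    by (rule sum_mono, rule gnorm_l2) (use assms in auto)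
  finally show ?thesis .
qed



lemma aux1: "0 \<le> (b::real) \<Longrightarrow> a + b \<le> c \<Longrightarrow> a \<le> c" by linarith
lemma aux2: "(a::real) + b \<le> c \<Longrightarrow> 0 \<le> a \<Longrightarrow> b \<le> c" by linarith

theorem corollary2p2:
  fixes A :: "real ^ 'n::finite ^ 'm::finite"
    and G :: "nat \<Rightarrow> 'n set" and r :: nat
    and p lam :: real and S :: nat
    and xbar xstar :: "real ^ 'n" and b :: "real ^ 'm"
  assumes part: "group_partition r G"
    and p: "1 \<le> p" "p \<le> 2"
    and S: "S \<ge> 1" "card (nonzero_groups r G xbar) = S"
    and b: "b = A *v xbar"
    and grec: "GREC A r G p (1/2) S S"
    and lam: "lam > 0"
    and min: "\<forall>x. norm (A *v xstar - b) ^ 2 + lam * pq_norm p (1/2) G {..<r} xstar powr (1/2)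
                 \<le> norm (A *v x - b) ^ 2 + lam * pq_norm p (1/2) G {..<r} x powr (1/2)"
  shows "norm (xstar - xbar) ^ 2
           \<le> 2 * lam powr (4/3) * real S / grec_phi A r G p (1/2) S S powr (8/3)"
proof -
  define d where "d = xstar - xbar"
  define J where "J = nonzero_groups r G xbar"
  define Jc where "Jc = {..<r} - J"
  define g where "g i = gnorm p (G i) d" for i
  define s where "s i = sqrt (g i)" for i
  define phi where "phi = grec_phi A r G p (1/2) S S"
  define c where "c = lam powr (4/3) * real S / phi powr (8/3)"
  have p0: "p > 0" using p by simp
  have phi0: "phi > 0" using grec by (simp add: GREC_def phi_def)
  have c0: "c \<ge> 0" using lam phi0 by (simp add: c_def)
  have JL: "J \<subseteq> {..<r}" by (auto simp: J_def nonzero_groups_def)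
  have cJ: "card J = S" using S J_def by simp
  have fin: "finite J" "finite Jc" using JL by (auto simp: Jc_def intro: finite_subset)
  have s0: "s i \<ge> 0" for i by (simp add: s_def g_def gnorm_nonneg)
  have g0: "g i \<ge> 0" for i by (simp add: g_def gnorm_nonneg)
  have s4: "s i ^ 4 = g i ^ 2" for i
  proof -
    have "s i ^ 4 = (sqrt (g i) ^ 2) ^ 2" by (simp add: s_def flip: power_mult)
    then show ?thesis using g0 by simp
  qed
  have Ad: "A *v xstar - b = A *v d" by (simp add: b d_def matrix_vector_mult_diff_distrib)
  have opt: "norm (A *v d) ^ 2 + lam * (\<Sum>i<r. sqrt (gnorm p (G i) xstar))
      \<le> lam * (\<Sum>i<r. sqrt (gnorm p (G i) xbar))"
    using min[rule_format, of xbar] Ad by (simp add: pq_half2 b)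
  have offJ: "gnorm p (G i) xbar = 0 \<and> gnorm p (G i) xstar = g i" if "i \<in> Jc" for i
  proof -
    have z: "\<forall>j\<in>G i. xbar $ j = 0" using that by (auto simp: Jc_def J_def nonzero_groups_def)
    have "gnorm p (G i) xbar = 0" using gnorm_zero2[OF z p0] .
    moreover have "gnorm p (G i) xstar = g i" unfolding g_def d_def using z by (intro gnorm_cong) simp
    ultimately show ?thesis by simp
  qed
  have onJ: "sqrt (gnorm p (G i) xbar) \<le> sqrt (gnorm p (G i) xstar) + s i" for i
  proof -
    have "xbar = xstar + (- d)" by (simp add: d_def)
    then have "gnorm p (G i) xbar \<le> gnorm p (G i) xstar + g i"
      using gnorm_triangle[OF p(1), of "G i" xstar "-d"] by (simp add: g_def gnorm_uminus)
    then have "sqrt (gnorm p (G i) xbar) \<le> sqrt (gnorm p (G i) xstar + g i)" by simp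
    also have "\<dots> \<le> sqrt (gnorm p (G i) xstar) + s i"
      unfolding s_def by (rule sqrt_add_le_add_sqrt) (auto simp: gnorm_nonneg g0)
    finally show ?thesis .
  qed
  have spl: "{..<r} = J \<union> Jc" "J \<inter> Jc = {}" using JL by (auto simp: Jc_def)
  have sumsplit: "(\<Sum>i<r. f i) = (\<Sum>i\<in>J. f i) + (\<Sum>i\<in>Jc. f i)" for f :: "nat \<Rightarrow> real"
    using spl fin by (simp add: sum.union_disjoint)
  have key: "norm (A *v d) ^ 2 + lam * (\<Sum>i\<in>Jc. s i) \<le> lam * (\<Sum>i\<in>J. s i)"
  proof -
    have e1: "(\<Sum>i\<in>Jc. sqrt (gnorm p (G i) xstar)) = (\<Sum>i\<in>Jc. s i)"
      using offJ by (auto simp: s_def intro: sum.cong)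
    have e2: "(\<Sum>i\<in>Jc. sqrt (gnorm p (G i) xbar)) = 0"
      using offJ by (auto intro: sum.neutral)
    have e3: "(\<Sum>i\<in>J. sqrt (gnorm p (G i) xbar)) \<le> (\<Sum>i\<in>J. sqrt (gnorm p (G i) xstar)) + (\<Sum>i\<in>J. s i)"
      using onJ by (simp add: sum.distrib[symmetric] sum_mono)
    have "norm (A *v d) ^ 2 + lam * ((\<Sum>i\<in>J. sqrt (gnorm p (G i) xstar)) + (\<Sum>i\<in>Jc. s i))
        \<le> lam * (\<Sum>i\<in>J. sqrt (gnorm p (G i) xbar))"
      using opt sumsplit[of "\<lambda>i. sqrt (gnorm p (G i) xstar)"] sumsplit[of "\<lambda>i. sqrt (gnorm p (G i) xbar)"] e1 e2
      by simp
    also have "\<dots> \<le> lam * ((\<Sum>i\<in>J. sqrt (gnorm p (G i) xstar)) + (\<Sum>i\<in>J. s i))"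
      using e3 lam by (intro mult_left_mono) auto
    finally show ?thesis by (simp add: ring_distribs)
  qed
  define Y where "Y = (\<Sum>i\<in>J. s i)"
  have Y0: "Y \<ge> 0" using s0 by (simp add: Y_def sum_nonneg)
  have Jc0: "(\<Sum>i\<in>Jc. s i) \<ge> 0" using s0 by (simp add: sum_nonneg)
  have AY: "norm (A *v d) ^ 2 \<le> lam * Y"
  proof -
    have "lam * (\<Sum>i\<in>Jc. s i) \<ge> 0" using lam Jc0 by simp
    moreover have "norm (A *v d) ^ 2 + lam * (\<Sum>i\<in>Jc. s i) \<le> lam * Y" using key by (simp only: Y_def)
    ultimately show ?thesis by (rule aux1)
  qed
  have cone: "(\<Sum>i\<in>Jc. s i) \<le> Y"
  proof -
    have "lam * (\<Sum>i\<in>Jc. s i) \<le> lam * Y" using key zero_le_power2[of "norm (A *v d)"] unfolding Y_def by (rule aux2)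
    then show ?thesis using lam by simp
  qed
  have Y4: "Y ^ 4 \<le> real S ^ 3 * (\<Sum>i\<in>J. g i ^ 2)"
    using power_mean4[of J s] s0 cJ s4 by (simp add: Y_def)
  show ?thesis
  proof (cases "d = 0")
    case True
    then have "xstar - xbar = 0" by (simp add: d_def)
    then show ?thesis using c0 by (simp add: phi_def[symmetric] c_def)
  next
    case False
    obtain K where K: "K \<subseteq> Jc" "card K = min S (card Jc)" "\<forall>i\<in>K. \<forall>k\<in>Jc - K. g k \<le> g i"
      using top_exists[OF fin(2), of S g] by blast
    have tg: "top_groups r G p J d S K" using K by (simp add: top_groups_def Jc_def g_def)
    define N where "N = K \<union> J"
    define P where "P = (\<Sum>i\<in>N. g i ^ 2)"
    have finN: "finite N" using K fin by (simp add: N_def finite_subset)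
    have P0: "P \<ge> 0" by (simp add: P_def sum_nonneg)
    have NL: "N \<subseteq> {..<r}" using K JL by (auto simp: N_def Jc_def)
    have pqs: "pq_norm p (1/2) G I d = (\<Sum>i\<in>I. s i)^2" for I
      by (simp add: pq_half s_def g_def)
    have cone2: "pq_norm p (1/2) G ({..<r} - J) d \<le> pq_norm p (1/2) G J d"
      unfolding pqs Jc_def[symmetric] Y_def[symmetric] using cone Jc0 by (intro power_mono) auto
    have phile: "phi \<le> norm (A *v d) / pq_norm p 2 G (K \<union> J) d"
      unfolding phi_def grec_phi_def
    proof (rule cInf_lower)
      show "norm (A *v d) / pq_norm p 2 G (K \<union> J) d \<in> {norm (A *v x) / pq_norm p 2 G (K \<union> J) x | x J K.
       x \<noteq> 0 \<and> J \<subseteq> {..<r} \<and> card J \<le> S \<and>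
       pq_norm p (1/2) G ({..<r} - J) x \<le> pq_norm p (1/2) G J x \<and>
       top_groups r G p J x S K}"
        apply (rule CollectI)
        apply (rule exI[of _ d], rule exI[of _ J], rule exI[of _ K])
        using False JL cJ cone2 tg by simp
      show "bdd_below {norm (A *v x) / pq_norm p 2 G (K \<union> J) x | x J K.
       x \<noteq> 0 \<and> J \<subseteq> {..<r} \<and> card J \<le> S \<and>
       pq_norm p (1/2) G ({..<r} - J) x \<le> pq_norm p (1/2) G J x \<and>
       top_groups r G p J x S K}"
        apply (rule bdd_belowI[of _ 0])
        apply clarify
        apply (rule divide_nonneg_nonneg)
         apply simp
        apply (simp add: pq_norm_def)
        done
    qed
    have pq2: "pq_norm p 2 G (K \<union> J) d = sqrt P" by (simp add: pq_two P_def N_def g_def)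
    have phiP: "phi * sqrt P \<le> norm (A *v d)"
    proof (cases "P = 0")
      case False
      then have "sqrt P > 0" using P0 by simp
      then show ?thesis using phile pq2 by (simp add: pos_le_divide_eq)
    qed simp
    have "(phi * sqrt P)^2 \<le> norm (A *v d) ^ 2" using phiP phi0 P0 by (intro power_mono) auto
    then have pP: "phi^2 * P \<le> lam * Y" using AY P0 by (simp add: power_mult_distrib)
    have PJ: "(\<Sum>i\<in>J. g i ^ 2) \<le> P" unfolding P_def N_def
      using finN N_def by (intro sum_mono2) auto
    have PK: "(\<Sum>i\<in>K. g i ^ 2) \<le> P" unfolding P_def N_def
      using finN N_def by (intro sum_mono2) auto
    have Y4P: "Y ^ 4 \<le> real S ^ 3 * P"
    proof -
      have "real S ^ 3 * (\<Sum>i\<in>J. g i ^ 2) \<le> real S ^ 3 * P" using PJ by (intro mult_left_mono) auto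
      then show ?thesis by (rule order_trans[OF Y4])
    qed
    have Pc: "P \<le> c"
    proof (cases "P = 0")
      case False
      then have Ppos: "P > 0" using P0 by simp
      have "(phi^2 * P)^4 \<le> (lam * Y)^4" using pP phi0 P0 by (intro power_mono) auto
      also have "\<dots> = lam^4 * Y^4" by (simp add: power_mult_distrib)
      also have "\<dots> \<le> lam^4 * (real S ^ 3 * P)" using Y4P lam by (intro mult_left_mono) auto
      finally have f1: "(phi^2 * P)^4 \<le> lam^4 * (real S ^ 3 * P)" .
      have e1: "(phi^2 * P)^4 = phi^8 * P^3 * P" by (simp add: eval_nat_numeral algebra_simps)
      have "phi^8 * P^3 * P \<le> lam^4 * real S ^ 3 * P" using f1 unfolding e1 by (simp add: mult.assoc)
      then have "phi^8 * P^3 \<le> lam^4 * real S ^ 3" using Ppos by simp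
      then have "P^3 \<le> lam^4 * real S ^ 3 / phi^8" using phi0 by (simp add: field_simps)
      also have "\<dots> = c^3"
      proof -
        have "(lam powr (4/3))^3 = lam powr (of_nat 3 * (4/3))" using lam by (intro powr_power) simp
        also have "\<dots> = lam ^ 4" using lam by simp
        finally have "(lam powr (4/3))^3 = lam^4" .
        moreover have "(phi powr (8/3))^3 = phi powr (of_nat 3 * (8/3))" using phi0 by (intro powr_power) simp
        moreover have "phi powr (of_nat 3 * (8/3)) = phi ^ 8" using phi0 by simp
        ultimately have e2: "(lam powr (4/3))^3 = lam^4" "(phi powr (8/3))^3 = phi^8" by simp_all
        have "c^3 = (lam powr (4/3))^3 * real S ^ 3 / (phi powr (8/3))^3"
          by (simp only: c_def power_mult_distrib power_divide)
        then show ?thesis unfolding e2 by simp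
      qed
      finally show ?thesis using c0 by (rule le_base3)
    qed (use c0 in simp)
    define R where "R = {..<r} - N"
    have RJ: "R = Jc - K" by (auto simp: R_def Jc_def N_def)
    have tail: "(\<Sum>i\<in>R. g i ^ 2) \<le> P"
    proof (cases "R = {}")
      case True then show ?thesis using P0 by simp
    next
      case False
      then have "K \<subset> Jc" using RJ K by auto
      then have "card K < card Jc" using fin psubset_card_mono by blast
      then have cK: "card K = S" using K(2) by (simp add: min_def split: if_splits)
      define X where "X = (\<Sum>i\<in>K. s i)"
      have X0: "X \<ge> 0" using s0 by (simp add: X_def sum_nonneg)
      have X4: "X ^ 4 \<le> real S ^ 3 * P"
      proof -
        have "X ^ 4 \<le> real S ^ 3 * (\<Sum>i\<in>K. g i ^ 2)"
          using power_mean4[of K s] s0 cK s4 by (simp add: X_def)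
        also have "\<dots> \<le> real S ^ 3 * P" using PK by (intro mult_left_mono) auto
        finally show ?thesis .
      qed
      define m where "m = X / real S"
      have Spos: "real S > 0" using S by simp
      have sm: "s k \<le> m" if "k \<in> R" for k
      proof -
        have "(\<Sum>i\<in>K. s k) \<le> X" unfolding X_def
          using K(3) that RJ by (intro sum_mono) (auto simp: s_def)
        then have "real S * s k \<le> X" using cK by simp
        then show ?thesis using Spos by (simp add: m_def field_simps)
      qed
      have "(\<Sum>i\<in>R. g i ^ 2) = (\<Sum>i\<in>R. s i ^ 4)" by (simp add: s4)
      also have "\<dots> \<le> (\<Sum>i\<in>R. m ^ 3 * s i)"
      proof (intro sum_mono)
        fix i assume "i \<in> R"
        have "s i ^ 4 = s i ^ 3 * s i" by (simp add: eval_nat_numeral)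
        also have "\<dots> \<le> m ^ 3 * s i" using sm[OF \<open>i \<in> R\<close>] s0 by (intro mult_right_mono power_mono) auto
        finally show "s i ^ 4 \<le> m ^ 3 * s i" .
      qed
      also have "\<dots> = m ^ 3 * (\<Sum>i\<in>R. s i)" by (simp add: sum_distrib_left)
      also have "\<dots> \<le> m ^ 3 * Y"
      proof -
        have "(\<Sum>i\<in>R. s i) \<le> (\<Sum>i\<in>Jc. s i)" using fin RJ s0 by (intro sum_mono2) auto
        then show ?thesis using cone X0 Spos by (intro mult_left_mono) (auto simp: m_def)
      qed
      also have "\<dots> = X ^ 3 * Y / real S ^ 3" by (simp add: m_def power_divide)
      also have "\<dots> \<le> P"
      proof -
        have "(X ^ 3 * Y) ^ 4 = (X ^ 4) ^ 3 * Y ^ 4" by (simp add: power_mult_distrib flip: power_mult)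
        also have "\<dots> \<le> (real S ^ 3 * P) ^ 3 * (real S ^ 3 * P)"
          using X4 Y4P X0 Y0 P0 by (intro mult_mono power_mono) auto
        also have "\<dots> = (real S ^ 3 * P) ^ 4" by (simp add: eval_nat_numeral)
        finally have "X ^ 3 * Y \<le> real S ^ 3 * P"
          by (rule le_base4) (use P0 in auto)
        then show ?thesis using Spos by (simp add: divide_le_eq mult.commute)
      qed
      finally show ?thesis .
    qed
    have total: "norm d ^ 2 \<le> (\<Sum>i<r. g i ^ 2)"
      unfolding g_def by (rule norm_groups[OF part p])
    have e: "(\<Sum>i<r. g i ^ 2) = P + (\<Sum>i\<in>R. g i ^ 2)"
      unfolding P_def R_def using NL by (simp add: sum.subset_diff[of N "{..<r}"])
    have "norm d ^ 2 \<le> P + (\<Sum>i\<in>R. g i ^ 2)" using total unfolding e .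
    also have "\<dots> \<le> c + c" by (rule add_mono[OF Pc order_trans[OF tail Pc]])
    also have "\<dots> = 2 * c" by simp
    finally have "norm d ^ 2 \<le> 2 * c" .
    then show ?thesis by (simp add: d_def c_def phi_def)
  qed
qed

end
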